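(* Let $T>0$ and let $u$ be a distributional solution on $[-T,T]\times\mathbb{R}^2$ of the BBM-KP-II equation $u_t+u_x+uu_x-u_{xxt}+\partial_x^{-1}u_{yy}=0$. If for every $t\in[-T,T]$ the distribution $u(t)$ has compact support, then for every $t\in[-T,T]$ and every $g\in C^\infty(\mathbb{R})$, $$\big\langle e^{x}g(y)\,(u-u_{xx})(t),\,1\big\rangle_{\mathcal{E}'(\mathbb{R}^2),\,\mathcal{E}(\mathbb{R}^2)}=0.$$
   Context: $\mathcal{E}(\mathbb{R}^2)=C^\infty(\mathbb{R}^2)$ and $\mathcal{E}'(\mathbb{R}^2)$ is its dual, the space of compactly supported distributions; $\langle\cdot,\cdot\rangle$ is the duality pairing. $\partial_x^{-1}$ is the Fourier multiplier $1/(i\xi)$ in the $x$-frequency variable $\xi$. A family $(T_t)_{t\in I}$ of distributions is in $C^k(I,\mathcal{D}'(\Omega))$ if $t\mapsto\langle T_t,\varphi\rangle$ is $C^k$ for every test function $\varphi$; a distributional solution is such a family (of class $C^1$ in $t$) satisfying the equation in the sense of distributions. *)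

theory Defs
  imports "HOL-Analysis.Analysis"
begin

type_synonym fn2 = "real \<times> real \<Rightarrow> real"
type_synonym distr = "fn2 \<Rightarrow> real"

definition dx :: "fn2 \<Rightarrow> fn2" where
  "dx f = (\<lambda>(x, y). deriv (\<lambda>s. f (s, y)) x)"

definition dy :: "fn2 \<Rightarrow> fn2" where
  "dy f = (\<lambda>(x, y). deriv (\<lambda>s. f (x, s)) y)"

inductive_set partials :: "fn2 \<Rightarrow> fn2 set" for f :: fn2 where
  self: "f \<in> partials f"
| step_x: "g \<in> partials f \<Longrightarrow> dx g \<in> partials f"
| step_y: "g \<in> partials f \<Longrightarrow> dy g \<in> partials f"

definition smooth2 :: "fn2 \<Rightarrow> bool" where
  "smooth2 f \<longleftrightarrow> (\<forall>g \<in> partials f. continuous_on UNIV g \<and>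
      (\<forall>x y. (\<lambda>s. g (s, y)) differentiable (at x) \<and> (\<lambda>s. g (x, s)) differentiable (at y)))"

definition smooth1 :: "(real \<Rightarrow> real) \<Rightarrow> bool" where
  "smooth1 g \<longleftrightarrow> (\<forall>n x. ((deriv ^^ n) g) differentiable (at x))"

definition tsupp :: "fn2 \<Rightarrow> (real \<times> real) set" where
  "tsupp f = closure {p. f p \<noteq> 0}"

definition test_fun :: "fn2 \<Rightarrow> bool" where
  "test_fun \<phi> \<longleftrightarrow> smooth2 \<phi> \<and> compact (tsupp \<phi>)"

definition Dmult :: "nat \<Rightarrow> nat \<Rightarrow> fn2 \<Rightarrow> fn2" where
  "Dmult a b \<phi> = (dx ^^ a) ((dy ^^ b) \<phi>)"

definition is_distribution :: "distr \<Rightarrow> bool" where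
  "is_distribution T \<longleftrightarrow>
     (\<forall>\<phi> \<psi> c. test_fun \<phi> \<and> test_fun \<psi> \<longrightarrow>
         T (\<lambda>p. \<phi> p + \<psi> p) = T \<phi> + T \<psi> \<and> T (\<lambda>p. c * \<phi> p) = c * T \<phi>) \<and>
     (\<forall>K. compact K \<longrightarrow> (\<exists>C N. \<forall>\<phi>. test_fun \<phi> \<and> tsupp \<phi> \<subseteq> K \<longrightarrow>
         \<bar>T \<phi>\<bar> \<le> C * (\<Sum>a\<le>N. \<Sum>b\<le>N. (SUP p. \<bar>Dmult a b \<phi> p\<bar>))))"

text \<open>Operations on distributions (only their values on test functions matter).\<close>
definition ddx :: "distr \<Rightarrow> distr" where
  "ddx T = (\<lambda>\<phi>. - T (dx \<phi>))"

definition ddy :: "distr \<Rightarrow> distr" where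
  "ddy T = (\<lambda>\<phi>. - T (dy \<phi>))"

definition dmult :: "fn2 \<Rightarrow> distr \<Rightarrow> distr" where
  "dmult f T = (\<lambda>\<phi>. T (\<lambda>p. f p * \<phi> p))"

definition dminus :: "distr \<Rightarrow> distr \<Rightarrow> distr" where
  "dminus S T = (\<lambda>\<phi>. S \<phi> - T \<phi>)"

definition loc_int :: "fn2 \<Rightarrow> bool" where
  "loc_int f \<longleftrightarrow> (\<forall>K. compact K \<longrightarrow> set_integrable lborel K f)"

definition fdistr :: "fn2 \<Rightarrow> distr" where
  "fdistr f = (\<lambda>\<phi>. \<integral>p. f p * \<phi> p \<partial>lborel)"

definition vanishes_on :: "distr \<Rightarrow> (real \<times> real) set \<Rightarrow> bool" where
  "vanishes_on T U \<longleftrightarrow> (\<forall>\<phi>. test_fun \<phi> \<and> tsupp \<phi> \<subseteq> U \<longrightarrow> T \<phi> = 0)"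

definition dsupp :: "distr \<Rightarrow> (real \<times> real) set" where
  "dsupp T = UNIV - \<Union>{U. open U \<and> vanishes_on T U}"

text \<open>Duality pairing E'(R^2) x E(R^2) for a compactly supported distribution T:
  <T, psi> = T(chi psi), chi a test function equal to 1 near the support of T.\<close>
definition pairE :: "distr \<Rightarrow> fn2 \<Rightarrow> real" where
  "pairE T \<psi> = T (\<lambda>p. (SOME chi. test_fun chi \<and>
        (\<exists>U. open U \<and> dsupp T \<subseteq> U \<and> (\<forall>q\<in>U. chi q = 1))) p * \<psi> p)"

text \<open>Distributional solution of BBM-KP-II
   u_t + u_x + u u_x - u_xxt + dx^{-1} u_yy = 0  on [-T,T] \<times> R^2.
  u(t) is a function with u(t), u(t)^2 locally integrable (so u u_x = (u^2/2)_x makes sense);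
  t \<mapsto> <u(t),phi> is C^1 on [-T,T]; the term dx^{-1} u_yy is a family of distributions
  w(t) with dx w(t) = dyy u(t).\<close>
definition bbm_kp_solution :: "real \<Rightarrow> (real \<Rightarrow> fn2) \<Rightarrow> bool" where
  "bbm_kp_solution T u \<longleftrightarrow>
     (\<forall>t\<in>{-T..T}. loc_int (u t) \<and> loc_int (\<lambda>p. (u t p)\<^sup>2)) \<and>
     (\<forall>\<phi>. test_fun \<phi> \<longrightarrow> (\<exists>u'. continuous_on {-T..T} u' \<and>
        (\<forall>t\<in>{-T..T}. ((\<lambda>s. fdistr (u s) \<phi>) has_real_derivative u' t) (at t within {-T..T})))) \<and>
     (\<exists>w. (\<forall>t\<in>{-T..T}. is_distribution (w t) \<and>
            (\<forall>\<phi>. test_fun \<phi> \<longrightarrow> ddx (w t) \<phi> = ddy (ddy (fdistr (u t))) \<phi>)) \<and>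
          (\<forall>t\<in>{-T..T}. \<forall>\<phi>. test_fun \<phi> \<longrightarrow>
             (\<exists>d1 d2.
                ((\<lambda>s. fdistr (u s) \<phi>) has_real_derivative d1) (at t within {-T..T}) \<and>
                ((\<lambda>s. ddx (ddx (fdistr (u s))) \<phi>) has_real_derivative d2) (at t within {-T..T}) \<and>
                d1 + ddx (fdistr (u t)) \<phi> + ddx (fdistr (\<lambda>p. (u t p)\<^sup>2 / 2)) \<phi> - d2 + w t \<phi> = 0)))"

end

theory Submission
  imports Defs "HOL-Computational_Algebra.Polynomial"
begin


definition sm :: "nat \<Rightarrow> (real \<Rightarrow> real) \<Rightarrow> bool" where
  "sm k h \<longleftrightarrow> (\<forall>m\<le>k. \<forall>x. (deriv ^^ m) h differentiable (at x))"

lemma smooth1_sm: "smooth1 h \<longleftrightarrow> (\<forall>k. sm k h)"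
  unfolding smooth1_def sm_def by auto

lemma deriv_shift: "(deriv ^^ Suc m) h = (deriv ^^ m) (deriv h)"
  by (simp add: funpow_Suc_right del: funpow.simps)

lemma sm_Suc: "sm (Suc k) h \<Longrightarrow> sm k (deriv h) \<and> sm k h"
  unfolding sm_def by (metis Suc_le_mono deriv_shift le_SucI)

lemma sm_SucI: "sm k (deriv h) \<Longrightarrow> (\<forall>x. h differentiable (at x)) \<Longrightarrow> sm (Suc k) h"
  unfolding sm_def apply clarify
  subgoal for m x by (cases m) (auto simp: deriv_shift simp del: funpow.simps)
  done

lemma deriv_add_fun:
  fixes a b :: "real \<Rightarrow> real"
  assumes "\<forall>x. a differentiable (at x)" "\<forall>x. b differentiable (at x)"
  shows "deriv (\<lambda>x. a x + b x) = (\<lambda>x. deriv a x + deriv b x)"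
proof
  fix x
  have "((\<lambda>x. a x + b x) has_real_derivative deriv a x + deriv b x) (at x)"
    using assms by (intro DERIV_add) (auto simp: DERIV_deriv_iff_real_differentiable)
  thus "deriv (\<lambda>x. a x + b x) x = deriv a x + deriv b x" by (rule DERIV_imp_deriv)
qed

lemma deriv_mult_fun:
  fixes a b :: "real \<Rightarrow> real"
  assumes "\<forall>x. a differentiable (at x)" "\<forall>x. b differentiable (at x)"
  shows "deriv (\<lambda>x. a x * b x) = (\<lambda>x. deriv a x * b x + a x * deriv b x)"
proof
  fix x
  have d1: "DERIV a x :> deriv a x" "DERIV b x :> deriv b x"
    using assms by (auto simp: DERIV_deriv_iff_real_differentiable)
  have "((\<lambda>x. a x * b x) has_real_derivative a x * deriv b x + deriv a x * b x) (at x)"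
    by (rule DERIV_mult'[OF d1])
  then have "((\<lambda>x. a x * b x) has_real_derivative deriv a x * b x + a x * deriv b x) (at x)"
    by (simp add: ac_simps)
  thus "deriv (\<lambda>x. a x * b x) x = deriv a x * b x + a x * deriv b x" by (rule DERIV_imp_deriv)
qed

lemma Lsum:
  fixes a b :: "real \<Rightarrow> real"
  assumes "\<forall>m<n. \<forall>x. (deriv^^m) a differentiable (at x) \<and> (deriv^^m) b differentiable (at x)"
  shows "(deriv^^n) (\<lambda>x. a x + b x) = (\<lambda>x. (deriv^^n) a x + (deriv^^n) b x)"
  using assms
proof (induction n)
  case 0 then show ?case by simp
next
  case (Suc n)
  then have IH: "(deriv^^n) (\<lambda>x. a x + b x) = (\<lambda>x. (deriv^^n) a x + (deriv^^n) b x)" by auto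
  have "\<forall>x. (deriv^^n) a differentiable at x" "\<forall>x. (deriv^^n) b differentiable at x"
    using Suc.prems by auto
  then show ?case using deriv_add_fun[of "(deriv^^n) a" "(deriv^^n) b"] by (simp add: IH)
qed

lemma sm_add: "sm k a \<Longrightarrow> sm k b \<Longrightarrow> sm k (\<lambda>x. a x + b x)"
  unfolding sm_def
proof clarify
  fix m x assume a: "\<forall>m\<le>k. \<forall>x. (deriv ^^ m) a differentiable at x"
    and b: "\<forall>m\<le>k. \<forall>x. (deriv ^^ m) b differentiable at x" and m: "m \<le> k"
  have "(deriv^^m) (\<lambda>x. a x + b x) = (\<lambda>x. (deriv^^m) a x + (deriv^^m) b x)"
    using a b m by (intro Lsum) auto
  then show "(deriv ^^ m) (\<lambda>x. a x + b x) differentiable at x"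
    using a b m by simp
qed

lemma sm_mult: "sm k a \<Longrightarrow> sm k b \<Longrightarrow> sm k (\<lambda>x. a x * b x)"
proof (induction k arbitrary: a b)
  case 0 then show ?case by (auto simp: sm_def)
next
  case (Suc k)
  from sm_Suc[OF Suc.prems(1)] sm_Suc[OF Suc.prems(2)]
  have h: "sm k (deriv a)" "sm k a" "sm k (deriv b)" "sm k b" by auto
  have da: "\<forall>x. a differentiable at x" "\<forall>x. b differentiable at x"
    using Suc.prems by (auto simp: sm_def)
  have "sm k (\<lambda>x. deriv a x * b x + a x * deriv b x)"
    by (intro sm_add Suc.IH h)
  then show ?case using da
    by (intro sm_SucI) (auto simp: deriv_mult_fun)
qed

lemma deriv_const_fun: "deriv (\<lambda>x::real. c::real) = (\<lambda>x. 0)"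
  by (rule ext, rule DERIV_imp_deriv, rule DERIV_const)

lemma deriv_pow_zero: "(deriv^^m) (\<lambda>x::real. 0::real) = (\<lambda>x. 0)"
  by (induction m) (simp_all only: funpow.simps o_apply id_apply deriv_const_fun)

lemma sm_const: "sm k (\<lambda>x. c)"
proof (induction k)
  case 0 then show ?case by (simp add: sm_def)
next
  case (Suc k)
  have "sm k (\<lambda>x. 0)" unfolding sm_def deriv_pow_zero by simp
  then show ?case by (intro sm_SucI) (auto simp: deriv_const_fun)
qed

lemma sm_inverse:
  assumes "\<forall>k. sm k d" "\<forall>x. d x > 0"
  shows "sm k (\<lambda>x. inverse (d x))"
proof (induction k)
  case 0 
  have "(\<lambda>x. inverse (d x)) differentiable at x" for x
  proof -
    have "DERIV d x :> deriv d x" using assms(1) unfolding sm_def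
      by (metis DERIV_deriv_iff_real_differentiable funpow_0 order_refl)
    have "d x \<noteq> 0" using assms(2) by (metis less_irrefl)
    from DERIV_inverse_fun[OF \<open>DERIV d x :> deriv d x\<close> this] show ?thesis
      unfolding real_differentiable_def by blast
  qed
  then show ?case by (simp add: sm_def)
next
  case (Suc k)
  have dd: "\<forall>x. d differentiable at x" using assms(1) unfolding sm_def by (metis funpow_0 order_refl)
  have "deriv (\<lambda>x. inverse (d x)) = (\<lambda>x. (- deriv d x) * (inverse (d x) * inverse (d x)))"
  proof
    fix x
    have 1: "DERIV d x :> deriv d x" using dd DERIV_deriv_iff_real_differentiable by blast
    have 2: "d x \<noteq> 0" using assms(2) by (metis less_irrefl)
    from DERIV_imp_deriv[OF DERIV_inverse_fun[OF 1 2]]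
    show "deriv (\<lambda>x. inverse (d x)) x = (- deriv d x) * (inverse (d x) * inverse (d x))"
      by (simp add: power2_eq_square)
  qed
  moreover have "sm k (\<lambda>x. (- deriv d x) * (inverse (d x) * inverse (d x)))"
  proof -
    have "sm k (\<lambda>x. (-1) * deriv d x)" using assms(1) sm_Suc by (intro sm_mult sm_const) blast
    then have "sm k (\<lambda>x. - deriv d x)" by simp
    then show ?thesis by (intro sm_mult Suc.IH)
  qed
  moreover have "\<forall>x. (\<lambda>x. inverse (d x)) differentiable at x"
    using Suc.IH by (auto simp: sm_def)
  ultimately show ?case by (intro sm_SucI) auto
qed

lemma DERIV_affine: "((\<lambda>x. a*x+b) has_real_derivative a) (at x)"
proof -
  have "((\<lambda>x. a*x+b) has_real_derivative a*1+0) (at x)"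
    by (rule DERIV_add[OF DERIV_cmult[OF DERIV_ident] DERIV_const])
  then show ?thesis by simp
qed

lemma diff_affine:
  fixes h :: "real \<Rightarrow> real"
  assumes "\<forall>x. h differentiable at x"
  shows "(\<lambda>x. h (a * x + b)) differentiable at x"
proof -
  have "((\<lambda>x. a*x+b) has_real_derivative a) (at x)" by (rule DERIV_affine)
  then have "(\<lambda>x. a*x+b) differentiable at x" unfolding real_differentiable_def by blast
  from differentiable_compose[where f=h and g="\<lambda>x. a*x+b" and s=UNIV, OF _ this] assms
  show ?thesis by auto
qed

lemma sm_affine: "sm k h \<Longrightarrow> sm k (\<lambda>x. h (a * x + b))"
proof (induction k arbitrary: h)
  case 0 then show ?case using diff_affine by (auto simp: sm_def)
next
  case (Suc k)
  have dd: "\<forall>x. h differentiable at x" using Suc.prems by (auto simp: sm_def)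
  have "deriv (\<lambda>x. h (a * x + b)) = (\<lambda>x. a * deriv h (a * x + b))"
  proof
    fix x
    have "((\<lambda>x. h (a * x + b)) has_real_derivative deriv h (a * x + b) * a) (at x)"
      using dd DERIV_chain2[OF _ DERIV_affine, of h] by (auto simp: DERIV_deriv_iff_real_differentiable)
    from DERIV_imp_deriv[OF this] show "deriv (\<lambda>x. h (a * x + b)) x = a * deriv h (a * x + b)" by simp
  qed
  moreover have "sm k (\<lambda>x. a * deriv h (a * x + b))"
    using sm_Suc[OF Suc.prems] Suc.IH by (intro sm_mult sm_const) auto
  moreover have "\<forall>x. (\<lambda>x. h (a * x + b)) differentiable at x"
    using diff_affine dd by auto
  ultimately show ?case by (intro sm_SucI) auto
qed




definition f0 :: "real \<Rightarrow> real" where "f0 t = (if t > 0 then exp (- 1 / t) else 0)"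

fun PP :: "nat \<Rightarrow> real poly" where
  "PP 0 = 1"
| "PP (Suc n) = [:0,0,1:] * (PP n - pderiv (PP n))"

definition DD :: "nat \<Rightarrow> real \<Rightarrow> real" where
  "DD n t = (if t > 0 then poly (PP n) (1/t) * exp (- 1 / t) else 0)"

lemma poly_exp_lim: "((\<lambda>y. poly p (1/y) * exp (- 1 / y)) \<longlongrightarrow> 0) (at_right (0::real))"
proof -
  have 1: "((\<lambda>s. poly p s * inverse (exp s)) \<longlongrightarrow> 0) at_top"
  proof -
    have "((\<lambda>s. \<Sum>i\<le>degree p. coeff p i * (s ^ i / exp s)) \<longlongrightarrow> (\<Sum>i\<le>degree p. coeff p i * 0)) at_top"
      by (intro tendsto_sum tendsto_mult tendsto_const tendsto_power_div_exp_0)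
    then show ?thesis
      by (simp add: poly_altdef sum_distrib_right divide_inverse mult.assoc)
  qed
  have 2: "filterlim (\<lambda>y::real. inverse y) at_top (at_right 0)"
    by (rule filterlim_inverse_at_top_right)
  from filterlim_compose[OF 1 2] show ?thesis
    by (simp add: exp_minus divide_inverse)
qed

lemma DD_deriv: "(DD n has_real_derivative DD (Suc n) t) (at t)"
proof -
  consider "t > 0" | "t < 0" | "t = 0" by linarith
  then show ?thesis
  proof cases
    case 1
    let ?g = "\<lambda>t. poly (PP n) (1/t) * exp (- 1 / t)"
    have "(?g has_real_derivative
        poly (pderiv (PP n)) (1/t) * (- inverse (t^2)) * exp (- 1 / t) + poly (PP n) (1/t) * (exp (- 1 / t) * inverse (t^2))) (at t)"
      using 1 by (auto intro!: derivative_eq_intros DERIV_chain2[OF poly_DERIV] simp: power2_eq_square field_simps)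
    moreover have "poly (pderiv (PP n)) (1/t) * (- inverse (t^2)) * exp (- 1 / t) + poly (PP n) (1/t) * (exp (- 1 / t) * inverse (t^2))
        = DD (Suc n) t"
      using 1 by (simp add: DD_def algebra_simps power2_eq_square divide_inverse)
    ultimately have "(?g has_real_derivative DD (Suc n) t) (at t)" by simp
    then show ?thesis
      by (rule has_field_derivative_transform_within_open[where S="{0<..}"]) (use 1 in \<open>auto simp: DD_def\<close>)
  next
    case 2
    have "((\<lambda>t. 0) has_real_derivative DD (Suc n) t) (at t)" using 2 by (simp add: DD_def)
    then show ?thesis
      by (rule has_field_derivative_transform_within_open[where S="{..<0}"]) (use 2 in \<open>auto simp: DD_def\<close>)
  next
    case 3
    have "((\<lambda>y. (DD n y - DD n 0) / (y - 0)) \<longlongrightarrow> 0) (at 0)"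
    proof (rule filterlim_split_at)
      show "((\<lambda>y. (DD n y - DD n 0) / (y - 0)) \<longlongrightarrow> 0) (at_left 0)"
      proof (rule tendsto_eventually)
        show "\<forall>\<^sub>F y in at_left 0. (DD n y - DD n 0) / (y - 0) = (0::real)"
          unfolding eventually_at_left_field by (auto simp: DD_def intro!: exI[of _ "-1"])
      qed
      have "((\<lambda>y. poly (pCons 0 (PP n)) (1/y) * exp (- 1 / y)) \<longlongrightarrow> 0) (at_right 0)"
        by (rule poly_exp_lim)
      then show "((\<lambda>y. (DD n y - DD n 0) / (y - 0)) \<longlongrightarrow> 0) (at_right 0)"
        apply (rule tendsto_cong[THEN iffD1, rotated])
        unfolding eventually_at_right_field by (auto simp: DD_def divide_inverse intro!: exI[of _ 1])
    qed
    then show ?thesis using 3 by (simp add: has_field_derivative_iff DD_def)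
  qed
qed

lemma DD0: "DD 0 = f0" by (auto simp: DD_def f0_def)

lemma deriv_pow_f0: "(deriv ^^ n) f0 = DD n"
proof (induction n)
  case 0 then show ?case by (simp add: DD0)
next
  case (Suc n)
  then show ?case using DD_deriv by (auto intro!: DERIV_imp_deriv)
qed

lemma sm_f0: "sm k f0"
  unfolding sm_def deriv_pow_f0 real_differentiable_def using DD_deriv by blast

definition st :: "real \<Rightarrow> real" where "st t = f0 t * inverse (f0 t + f0 ((-1) * t + 1))"

lemma f0_pos: "t > 0 \<Longrightarrow> f0 t > 0" and f0_nonneg: "f0 t \<ge> 0" and f0_zero: "t \<le> 0 \<Longrightarrow> f0 t = 0"
  by (auto simp: f0_def)

lemma sm_st: "sm k st"
proof -
  have "sm k (\<lambda>t. inverse (f0 t + f0 ((-1) * t + 1)))"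
  proof (rule sm_inverse)
    show "\<forall>k. sm k (\<lambda>t. f0 t + f0 ((-1) * t + 1))" by (intro allI sm_add sm_f0 sm_affine)
    show "\<forall>x. 0 < f0 x + f0 (- 1 * x + 1)"
    proof
      fix x :: real
      show "0 < f0 x + f0 (- 1 * x + 1)"
        using f0_pos[of x] f0_pos[of "-1*x+1"] f0_nonneg[of x] f0_nonneg[of "-1*x+1"]
        by (cases "x > 0") auto
    qed
  qed
  then show ?thesis unfolding st_def[abs_def] by (intro sm_mult sm_f0)
qed

lemma st0: "t \<le> 0 \<Longrightarrow> st t = 0" by (simp add: st_def f0_zero)
lemma st1: "t \<ge> 1 \<Longrightarrow> st t = 1"
  using f0_pos[of t] by (simp add: st_def f0_zero)

lemma smooth1_st: "smooth1 st" using sm_st smooth1_sm by blast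




lemma dx_app: "dx f p = deriv (\<lambda>s. f (s, snd p)) (fst p)"
  by (cases p) (simp add: dx_def)
lemma dy_app: "dy f p = deriv (\<lambda>s. f (fst p, s)) (snd p)"
  by (cases p) (simp add: dy_def)

definition pdx :: "fn2 \<Rightarrow> bool" where "pdx h \<longleftrightarrow> (\<forall>x y. (\<lambda>s. h (s, y)) differentiable (at x))"
definition pdy :: "fn2 \<Rightarrow> bool" where "pdy h \<longleftrightarrow> (\<forall>x y. (\<lambda>s. h (x, s)) differentiable (at y))"
definition pd :: "fn2 \<Rightarrow> bool" where "pd h \<longleftrightarrow> continuous_on UNIV h \<and> pdx h \<and> pdy h"

lemma smooth2_pd: "smooth2 f \<longleftrightarrow> (\<forall>g\<in>partials f. pd g)"
  unfolding smooth2_def pd_def pdx_def pdy_def by blast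

lemma dx_add: "pdx h1 \<Longrightarrow> pdx h2 \<Longrightarrow> dx (\<lambda>p. h1 p + h2 p) = (\<lambda>p. dx h1 p + dx h2 p)"
  unfolding pdx_def dx_app
proof
  fix p :: "real \<times> real"
  assume a: "\<forall>x y. (\<lambda>s. h1 (s, y)) differentiable at x" "\<forall>x y. (\<lambda>s. h2 (s, y)) differentiable at x"
  show "deriv (\<lambda>s. h1 (s, snd p) + h2 (s, snd p)) (fst p) =
        deriv (\<lambda>s. h1 (s, snd p)) (fst p) + deriv (\<lambda>s. h2 (s, snd p)) (fst p)"
  proof -
    have d1: "\<forall>x. (\<lambda>s. h1 (s, snd p)) differentiable at x" "\<forall>x. (\<lambda>s. h2 (s, snd p)) differentiable at x"
      using a by blast+
    show ?thesis using fun_cong[OF deriv_add_fun[OF d1], of "fst p"] by simp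
  qed
qed

lemma dy_add: "pdy h1 \<Longrightarrow> pdy h2 \<Longrightarrow> dy (\<lambda>p. h1 p + h2 p) = (\<lambda>p. dy h1 p + dy h2 p)"
  unfolding pdy_def dy_app
proof
  fix p :: "real \<times> real"
  assume a: "\<forall>x y. (\<lambda>s. h1 (x, s)) differentiable at y" "\<forall>x y. (\<lambda>s. h2 (x, s)) differentiable at y"
  show "deriv (\<lambda>s. h1 (fst p, s) + h2 (fst p, s)) (snd p) =
        deriv (\<lambda>s. h1 (fst p, s)) (snd p) + deriv (\<lambda>s. h2 (fst p, s)) (snd p)"
  proof -
    have d1: "\<forall>x. (\<lambda>s. h1 (fst p, s)) differentiable at x" "\<forall>x. (\<lambda>s. h2 (fst p, s)) differentiable at x"
      using a by blast+
    show ?thesis using fun_cong[OF deriv_add_fun[OF d1], of "snd p"] by simp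
  qed
qed

lemma dx_mult: "pdx h1 \<Longrightarrow> pdx h2 \<Longrightarrow> dx (\<lambda>p. h1 p * h2 p) = (\<lambda>p. dx h1 p * h2 p + h1 p * dx h2 p)"
  unfolding pdx_def dx_app
proof
  fix p :: "real \<times> real"
  assume a: "\<forall>x y. (\<lambda>s. h1 (s, y)) differentiable at x" "\<forall>x y. (\<lambda>s. h2 (s, y)) differentiable at x"
  have "deriv (\<lambda>s. h1 (s, snd p) * h2 (s, snd p)) (fst p) =
        deriv (\<lambda>s. h1 (s, snd p)) (fst p) * h2 (fst p, snd p) + h1 (fst p, snd p) * deriv (\<lambda>s. h2 (s, snd p)) (fst p)"
  proof -
    have d1: "\<forall>x. (\<lambda>s. h1 (s, snd p)) differentiable at x" "\<forall>x. (\<lambda>s. h2 (s, snd p)) differentiable at x"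
      using a by blast+
    show ?thesis using fun_cong[OF deriv_mult_fun[OF d1], of "fst p"] by simp
  qed
  then show "deriv (\<lambda>s. h1 (s, snd p) * h2 (s, snd p)) (fst p) =
        deriv (\<lambda>s. h1 (s, snd p)) (fst p) * h2 p + h1 p * deriv (\<lambda>s. h2 (s, snd p)) (fst p)"
    by simp
qed

lemma dy_mult: "pdy h1 \<Longrightarrow> pdy h2 \<Longrightarrow> dy (\<lambda>p. h1 p * h2 p) = (\<lambda>p. dy h1 p * h2 p + h1 p * dy h2 p)"
  unfolding pdy_def dy_app
proof
  fix p :: "real \<times> real"
  assume a: "\<forall>x y. (\<lambda>s. h1 (x, s)) differentiable at y" "\<forall>x y. (\<lambda>s. h2 (x, s)) differentiable at y"
  have "deriv (\<lambda>s. h1 (fst p, s) * h2 (fst p, s)) (snd p) =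
        deriv (\<lambda>s. h1 (fst p, s)) (snd p) * h2 (fst p, snd p) + h1 (fst p, snd p) * deriv (\<lambda>s. h2 (fst p, s)) (snd p)"
  proof -
    have d1: "\<forall>x. (\<lambda>s. h1 (fst p, s)) differentiable at x" "\<forall>x. (\<lambda>s. h2 (fst p, s)) differentiable at x"
      using a by blast+
    show ?thesis using fun_cong[OF deriv_mult_fun[OF d1], of "snd p"] by simp
  qed
  then show "deriv (\<lambda>s. h1 (fst p, s) * h2 (fst p, s)) (snd p) =
        deriv (\<lambda>s. h1 (fst p, s)) (snd p) * h2 p + h1 p * deriv (\<lambda>s. h2 (fst p, s)) (snd p)"
    by simp
qed

lemma pd_add: "pd h1 \<Longrightarrow> pd h2 \<Longrightarrow> pd (\<lambda>p. h1 p + h2 p)"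
  unfolding pd_def pdx_def pdy_def by (auto intro!: continuous_on_add)

lemma pd_mult: "pd h1 \<Longrightarrow> pd h2 \<Longrightarrow> pd (\<lambda>p. h1 p * h2 p)"
  unfolding pd_def pdx_def pdy_def by (auto intro!: continuous_on_mult)

inductive_set gen :: "fn2 set \<Rightarrow> fn2 set" for S where
  base: "A \<in> S \<Longrightarrow> B \<in> S \<Longrightarrow> (\<lambda>p. A p * B p) \<in> gen S"
| add: "h1 \<in> gen S \<Longrightarrow> h2 \<in> gen S \<Longrightarrow> (\<lambda>p. h1 p + h2 p) \<in> gen S"

lemma gen_pd:
  assumes "\<forall>A\<in>S. pd A" shows "h \<in> gen S \<Longrightarrow> pd h"
  by (induction h rule: gen.induct) (use assms in \<open>auto intro: pd_add pd_mult\<close>)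

lemma gen_d:
  assumes S: "\<forall>A\<in>S. pd A \<and> dx A \<in> S \<and> dy A \<in> S"
  shows "h \<in> gen S \<Longrightarrow> dx h \<in> gen S \<and> dy h \<in> gen S"
proof (induction h rule: gen.induct)
  case (base A B)
  have pA: "pdx A" "pdy A" "dx A \<in> S" "dy A \<in> S" using S base(1) by (auto simp: pd_def)
  have pB: "pdx B" "pdy B" "dx B \<in> S" "dy B \<in> S" using S base(2) by (auto simp: pd_def)
  have "(\<lambda>p. (\<lambda>p. dx A p * B p) p + (\<lambda>p. A p * dx B p) p) \<in> gen S"
    by (rule gen.add; rule gen.base) (use pA pB base in auto)
  moreover have "(\<lambda>p. (\<lambda>p. dy A p * B p) p + (\<lambda>p. A p * dy B p) p) \<in> gen S"
    by (rule gen.add; rule gen.base) (use pA pB base in auto)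
  ultimately show ?case using dx_mult[OF pA(1) pB(1)] dy_mult[OF pA(2) pB(2)] by simp
next
  case (add h1 h2)
  have "pd h1" "pd h2" using gen_pd S add by auto
  then have p: "pdx h1" "pdx h2" "pdy h1" "pdy h2" by (auto simp: pd_def)
  have "(\<lambda>p. (dx h1) p + (dx h2) p) \<in> gen S" "(\<lambda>p. (dy h1) p + (dy h2) p) \<in> gen S"
    using add by (auto intro: gen.add)
  then show ?case using dx_add[OF p(1,2)] dy_add[OF p(3,4)] by simp
qed

lemma partials_sub:
  assumes "\<forall>g\<in>G. dx g \<in> G \<and> dy g \<in> G" "f \<in> G" shows "partials f \<subseteq> G"
proof
  fix g assume "g \<in> partials f"
  then show "g \<in> G" by (induction rule: partials.induct) (use assms in auto)
qed

lemma smooth2_gen: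
  assumes S: "\<forall>A\<in>S. pd A \<and> dx A \<in> S \<and> dy A \<in> S" and f: "f \<in> gen S"
  shows "smooth2 f"
proof -
  have "partials f \<subseteq> gen S" using partials_sub[of "gen S" f] gen_d[OF S] f by blast
  then show ?thesis unfolding smooth2_pd using gen_pd S by blast
qed

lemma dx_const: "dx (\<lambda>p. c) = (\<lambda>p. 0)" and dy_const: "dy (\<lambda>p. c) = (\<lambda>p. 0)"
  by (auto simp: dx_def dy_def deriv_const_fun)

lemma pd_const: "pd (\<lambda>p. c)" by (simp add: pd_def pdx_def pdy_def)

lemma smooth2_self: "smooth2 f \<Longrightarrow> pd f"
  unfolding smooth2_pd using partials.self by blast

definition SS :: "fn2 \<Rightarrow> fn2 \<Rightarrow> fn2 set" where
  "SS f g = partials f \<union> partials g \<union> range (\<lambda>c. \<lambda>p. c)"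

lemma SS_ok:
  assumes "smooth2 f" "smooth2 g"
  shows "\<forall>A\<in>SS f g. pd A \<and> dx A \<in> SS f g \<and> dy A \<in> SS f g"
proof
  fix A assume A: "A \<in> SS f g"
  show "pd A \<and> dx A \<in> SS f g \<and> dy A \<in> SS f g"
  proof (cases "A \<in> range (\<lambda>c. \<lambda>p. c)")
    case True
    then obtain c where "A = (\<lambda>p. c)" by blast
    then show ?thesis by (simp add: dx_const dy_const pd_const SS_def)
  next
    case False
    then have "A \<in> partials f \<or> A \<in> partials g" using A by (simp add: SS_def)
    then show ?thesis using assms unfolding smooth2_pd SS_def
      by (metis UnI1 UnI2 partials.step_x partials.step_y)
  qed
qed

lemma smooth2_mult: "smooth2 f \<Longrightarrow> smooth2 g \<Longrightarrow> smooth2 (\<lambda>p. f p * g p)"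
proof -
  assume a: "smooth2 f" "smooth2 g"
  have "(\<lambda>p. f p * g p) \<in> gen (SS f g)" by (rule gen.base; simp add: SS_def partials.self)
  then show ?thesis by (rule smooth2_gen[OF SS_ok[OF a]])
qed

lemma smooth2_add: "smooth2 f \<Longrightarrow> smooth2 g \<Longrightarrow> smooth2 (\<lambda>p. f p + g p)"
proof -
  assume a: "smooth2 f" "smooth2 g"
  have "(\<lambda>p. (\<lambda>p. f p * (\<lambda>p. 1) p) p + (\<lambda>p. g p * (\<lambda>p. 1) p) p) \<in> gen (SS f g)"
    by (intro gen.add gen.base) (simp_all add: SS_def partials.self)
  then show ?thesis using smooth2_gen[OF SS_ok[OF a]] by simp
qed

lemma smooth2_cmult: "smooth2 f \<Longrightarrow> smooth2 (\<lambda>p. c * f p)"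
proof -
  assume a: "smooth2 f"
  have "(\<lambda>p. (\<lambda>p. c) p * f p) \<in> gen (SS f f)"
    by (intro gen.base) (simp_all add: SS_def partials.self)
  then show ?thesis using smooth2_gen[OF SS_ok[OF a a]] by simp
qed

lemma smooth2_diff: "smooth2 f \<Longrightarrow> smooth2 g \<Longrightarrow> smooth2 (\<lambda>p. f p - g p)"
  using smooth2_add[of f "\<lambda>p. (-1) * g p"] smooth2_cmult[of g "-1"] by simp

lemma smooth2_dx: "smooth2 f \<Longrightarrow> smooth2 (dx f)"
proof -
  assume a: "smooth2 f"
  have "partials (dx f) \<subseteq> partials f"
    by (rule partials_sub) (auto intro: partials.step_x partials.step_y partials.self)
  then show ?thesis using a unfolding smooth2_pd by blast
qed

lemma deriv_cmult_fun: "deriv (\<lambda>s::real. A s * (c::real)) x = deriv A x * c" if "A differentiable at x"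
  using that by (intro DERIV_imp_deriv DERIV_cmult_right) (simp add: DERIV_deriv_iff_real_differentiable)

lemma smooth2_fst:
  assumes "smooth1 a"
  shows "smooth2 (\<lambda>p. a (fst p))"
proof -
  let ?G = "range (\<lambda>m. \<lambda>p::real\<times>real. (deriv^^m) a (fst p)) \<union> {\<lambda>p. 0}"
  have d: "(deriv^^m) a differentiable at x" for m x using assms by (simp add: smooth1_def)
  have cl: "\<forall>g\<in>?G. dx g \<in> ?G \<and> dy g \<in> ?G"
  proof
    fix g assume "g \<in> ?G"
    then consider m where "g = (\<lambda>p. (deriv^^m) a (fst p))" | "g = (\<lambda>p. 0)" by blast
    then show "dx g \<in> ?G \<and> dy g \<in> ?G"
    proof cases
      case 1
      have "dx g = (\<lambda>p. (deriv^^Suc m) a (fst p))" unfolding 1 by (auto simp: dx_def)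
      moreover have "dy g = (\<lambda>p. 0)" unfolding 1 by (auto simp: dy_def deriv_const_fun)
      ultimately show ?thesis by blast
    next
      case 2 then show ?thesis using dx_const[of 0] dy_const[of 0] by auto
    qed
  qed
  have "partials (\<lambda>p. a (fst p)) \<subseteq> ?G"
    by (rule partials_sub[OF cl]) (auto intro: image_eqI[where x=0])
  moreover have "\<forall>g\<in>?G. pd g"
  proof
    fix g assume "g \<in> ?G"
    then consider m where "g = (\<lambda>p. (deriv^^m) a (fst p))" | "g = (\<lambda>p. 0)" by blast
    then show "pd g"
    proof cases
      case 1
      have c: "continuous_on UNIV ((deriv^^m) a)"
        using d by (intro continuous_at_imp_continuous_on) (auto intro: differentiable_imp_continuous_within)
      have "continuous_on UNIV g" unfolding 1
        by (rule continuous_on_compose2[OF c continuous_on_fst]) auto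
      then show ?thesis unfolding 1 pd_def pdx_def pdy_def using d by auto
    qed (simp add: pd_const)
  qed
  ultimately show ?thesis unfolding smooth2_pd by blast
qed

lemma smooth2_snd:
  assumes "smooth1 a"
  shows "smooth2 (\<lambda>p. a (snd p))"
proof -
  let ?G = "range (\<lambda>m. \<lambda>p::real\<times>real. (deriv^^m) a (snd p)) \<union> {\<lambda>p. 0}"
  have d: "(deriv^^m) a differentiable at x" for m x using assms by (simp add: smooth1_def)
  have cl: "\<forall>g\<in>?G. dx g \<in> ?G \<and> dy g \<in> ?G"
  proof
    fix g assume "g \<in> ?G"
    then consider m where "g = (\<lambda>p. (deriv^^m) a (snd p))" | "g = (\<lambda>p. 0)" by blast
    then show "dx g \<in> ?G \<and> dy g \<in> ?G"
    proof cases
      case 1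
      have "dy g = (\<lambda>p. (deriv^^Suc m) a (snd p))" unfolding 1 by (auto simp: dy_def)
      moreover have "dx g = (\<lambda>p. 0)" unfolding 1 by (auto simp: dx_def deriv_const_fun)
      ultimately show ?thesis by blast
    next
      case 2 then show ?thesis using dx_const[of 0] dy_const[of 0] by auto
    qed
  qed
  have "partials (\<lambda>p. a (snd p)) \<subseteq> ?G"
    by (rule partials_sub[OF cl]) (auto intro: image_eqI[where x=0])
  moreover have "\<forall>g\<in>?G. pd g"
  proof
    fix g assume "g \<in> ?G"
    then consider m where "g = (\<lambda>p. (deriv^^m) a (snd p))" | "g = (\<lambda>p. 0)" by blast
    then show "pd g"
    proof cases
      case 1
      have c: "continuous_on UNIV ((deriv^^m) a)"
        using d by (intro continuous_at_imp_continuous_on) (auto intro: differentiable_imp_continuous_within)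
      have "continuous_on UNIV g" unfolding 1
        by (rule continuous_on_compose2[OF c continuous_on_snd]) auto
      then show ?thesis unfolding 1 pd_def pdx_def pdy_def using d by auto
    qed (simp add: pd_const)
  qed
  ultimately show ?thesis unfolding smooth2_pd by blast
qed

lemma smooth2_sep: "smooth1 a \<Longrightarrow> smooth1 b \<Longrightarrow> smooth2 (\<lambda>p. a (fst p) * b (snd p))"
  using smooth2_mult[OF smooth2_fst smooth2_snd] .




lemma closed_tsupp: "closed (tsupp f)" by (simp add: tsupp_def)

lemma notin_tsupp: "p \<notin> tsupp f \<Longrightarrow> f p = 0"
proof (rule ccontr)
  assume "p \<notin> tsupp f" "f p \<noteq> 0"
  then show False using closure_subset[of "{p. f p \<noteq> 0}"] unfolding tsupp_def by auto
qed

lemma tsupp_sub: "(\<And>p. f p \<noteq> 0 \<Longrightarrow> p \<in> C) \<Longrightarrow> closed C \<Longrightarrow> tsupp f \<subseteq> C"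
  unfolding tsupp_def by (rule closure_minimal) (auto simp: subset_iff)

lemma tsupp_mult: "tsupp (\<lambda>p. f p * g p) \<subseteq> tsupp f \<inter> tsupp g"
proof (rule tsupp_sub)
  fix p assume "f p * g p \<noteq> 0"
  then show "p \<in> tsupp f \<inter> tsupp g" using notin_tsupp[of p f] notin_tsupp[of p g] by auto
qed (simp add: closed_Int closed_tsupp)

lemma tsupp_add: "tsupp (\<lambda>p. f p + g p) \<subseteq> tsupp f \<union> tsupp g"
proof (rule tsupp_sub)
  fix p assume "f p + g p \<noteq> 0"
  then show "p \<in> tsupp f \<union> tsupp g" using notin_tsupp[of p f] notin_tsupp[of p g]
    by (cases "p \<in> tsupp f") auto
qed (simp add: closed_Un closed_tsupp)

lemma tsupp_dx: "tsupp (dx f) \<subseteq> tsupp f"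
proof (rule tsupp_sub[OF _ closed_tsupp])
  fix p assume "dx f p \<noteq> 0"
  show "p \<in> tsupp f"
  proof (rule ccontr)
    assume np: "p \<notin> tsupp f"
    obtain x y where p: "p = (x, y)" by (cases p)
    have "open (- tsupp f)" using closed_tsupp by auto
    then obtain e where e: "e > 0" "ball p e \<subseteq> - tsupp f" using np open_contains_ball by blast
    have "\<forall>\<^sub>F s in nhds x. f (s, y) = 0"
    proof -
      have "\<forall>\<^sub>F s in nhds x. s \<in> ball x e" using e(1) by (intro eventually_nhds_in_open) auto
      then show ?thesis
      proof (rule eventually_mono)
        fix s assume "s \<in> ball x e"
        then have "(s, y) \<in> ball p e" by (simp add: p dist_Pair_Pair dist_commute)
        then show "f (s, y) = 0" using e(2) notin_tsupp by blast
      qed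
    qed
    then have "deriv (\<lambda>s. f (s, y)) x = deriv (\<lambda>s. 0) x" by (rule deriv_cong_ev) simp
    then have "dx f p = 0" by (simp add: p dx_def deriv_const_fun)
    with \<open>dx f p \<noteq> 0\<close> show False by simp
  qed
qed

lemma compact_sub: "compact K \<Longrightarrow> tsupp f \<subseteq> K \<Longrightarrow> compact (tsupp f)"
  using compact_Int_closed[of K "tsupp f"] closed_tsupp by (simp add: Int_absorb1)

lemma test_mult: "test_fun f \<Longrightarrow> smooth2 g \<Longrightarrow> test_fun (\<lambda>p. g p * f p)"
  unfolding test_fun_def
proof (intro conjI)
  assume a: "smooth2 f \<and> compact (tsupp f)" "smooth2 g"
  show "smooth2 (\<lambda>p. g p * f p)" using a by (intro smooth2_mult) auto
  have "tsupp (\<lambda>p. g p * f p) \<subseteq> tsupp f" using tsupp_mult[of g f] by blast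
  then show "compact (tsupp (\<lambda>p. g p * f p))" using a compact_sub by blast
qed

lemma test_add: "test_fun f \<Longrightarrow> test_fun g \<Longrightarrow> test_fun (\<lambda>p. f p + g p)"
  unfolding test_fun_def
proof (intro conjI)
  assume a: "smooth2 f \<and> compact (tsupp f)" "smooth2 g \<and> compact (tsupp g)"
  show "smooth2 (\<lambda>p. f p + g p)" using a by (intro smooth2_add) auto
  have "compact (tsupp f \<union> tsupp g)" using a by (intro compact_Un) auto
  then show "compact (tsupp (\<lambda>p. f p + g p))" using tsupp_add compact_sub by blast
qed

lemma smooth1_const: "smooth1 (\<lambda>x. c)" using sm_const smooth1_sm by blast

lemma smooth2_const: "smooth2 (\<lambda>p. c)"
  using smooth2_sep[OF smooth1_const[of c] smooth1_const[of 1]] by simp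

lemma test_cmult: "test_fun f \<Longrightarrow> test_fun (\<lambda>p. c * f p)"
  using test_mult[OF _ smooth2_const] .

lemma test_diff: "test_fun f \<Longrightarrow> test_fun g \<Longrightarrow> test_fun (\<lambda>p. f p - g p)"
  using test_add[of f "\<lambda>p. (-1) * g p"] test_cmult[of g "-1"] by simp

lemma test_dx: "test_fun f \<Longrightarrow> test_fun (dx f)"
  unfolding test_fun_def using smooth2_dx tsupp_dx compact_sub by blast

lemma test_zero: "test_fun (\<lambda>p. 0)"
  unfolding test_fun_def tsupp_def by (simp add: smooth2_const)




definition ph :: "real \<Rightarrow> nat \<Rightarrow> nat \<Rightarrow> real \<Rightarrow> real" where
  "ph d N i t = st (t / d + real N - real i + 1) - st (t / d + real N - real i)"

lemma smooth1_ph: "smooth1 (ph d N i)"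
proof -
  have "sm k (\<lambda>t. st ((1/d) * t + (real N - real i + 1)) + (-1) * st ((1/d) * t + (real N - real i)))" for k
    by (intro sm_add sm_mult sm_const sm_affine sm_st)
  moreover have "(\<lambda>t. st ((1/d) * t + (real N - real i + 1)) + (-1) * st ((1/d) * t + (real N - real i))) = ph d N i"
    by (rule ext) (simp add: ph_def algebra_simps)
  ultimately show ?thesis using smooth1_sm by metis
qed

lemma ph_sum:
  assumes d: "d > 0" and t: "\<bar>t\<bar> \<le> real N * d"
  shows "(\<Sum>i<2*N+1. ph d N i t) = 1"
proof -
  define g where "g i = st (t / d + real N - real i + 1)" for i :: nat
  have "ph d N i t = g i - g (Suc i)" for i by (simp add: g_def ph_def algebra_simps)
  then have "(\<Sum>i<2*N+1. ph d N i t) = g 0 - g (2*N+1)"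
    using sum_lessThan_telescope'[of g "2*N+1"] by simp
  moreover have "g 0 = 1"
  proof -
    have "- real N \<le> t / d" using t d by (simp add: field_simps abs_le_iff)
    then show ?thesis unfolding g_def by (intro st1) simp
  qed
  moreover have "g (2*N+1) = 0"
  proof -
    have "t / d \<le> real N" using t d by (simp add: field_simps abs_le_iff)
    then show ?thesis unfolding g_def by (intro st0) simp
  qed
  ultimately show ?thesis by simp
qed

lemma ph_supp:
  assumes d: "d > 0" and nz: "ph d N i t \<noteq> 0"
  shows "d * (real i - real N - 1) \<le> t \<and> t \<le> d * (real i - real N + 1)"
proof -
  define c where "c = t / d + real N - real i"
  have "\<not> (c + 1 \<le> 0)" using nz st0[of "c+1"] st0[of c] by (auto simp: ph_def c_def)
  moreover have "\<not> (c \<ge> 1)" using nz st1[of "c+1"] st1[of c] by (auto simp: ph_def c_def)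
  ultimately have "real i - real N - 1 \<le> t / d" "t / d \<le> real i - real N + 1" by (auto simp: c_def)
  then show ?thesis using d by (auto simp: field_simps)
qed

lemma glue:
  fixes T :: distr
  assumes add: "\<forall>\<phi> \<psi>. test_fun \<phi> \<and> test_fun \<psi> \<longrightarrow> T (\<lambda>p. \<phi> p + \<psi> p) = T \<phi> + T \<psi>"
    and phi: "test_fun \<phi>" and sub: "tsupp \<phi> \<subseteq> \<Union>{V. open V \<and> vanishes_on T V}"
  shows "T \<phi> = 0"
proof -
  have T0: "T (\<lambda>p. 0) = 0"
    using add[rule_format, of "\<lambda>p. 0" "\<lambda>p. 0"] test_zero by simp
  have Tsum: "test_fun (\<lambda>p. \<Sum>j\<in>I. f j p) \<and> T (\<lambda>p. \<Sum>j\<in>I. f j p) = (\<Sum>j\<in>I. T (f j))"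
    if "finite I" "\<forall>j\<in>I. test_fun (f j)" for I :: "(nat \<times> nat) set" and f
    using that
  proof (induction I rule: finite_induct)
    case empty then show ?case using T0 test_zero by simp
  next
    case (insert x F)
    then have tf: "test_fun (f x)" "test_fun (\<lambda>p. \<Sum>j\<in>F. f j p)" "T (\<lambda>p. \<Sum>j\<in>F. f j p) = (\<Sum>j\<in>F. T (f j))"
      by auto
    have "T (\<lambda>p. f x p + (\<lambda>p. \<Sum>j\<in>F. f j p) p) = T (f x) + T (\<lambda>p. \<Sum>j\<in>F. f j p)"
      using add tf by blast
    then show ?case using insert(1,2) tf test_add[OF tf(1,2)] by simp
  qed
  let ?K = "tsupp \<phi>"
  let ?G = "{V. open V \<and> vanishes_on T V}"
  have cK: "compact ?K" using phi by (simp add: test_fun_def)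
  obtain e where e: "e > 0" and leb: "\<And>x. x \<in> ?K \<Longrightarrow> \<exists>G\<in>?G. ball x e \<subseteq> G"
    using Heine_Borel_lemma[OF cK sub] by blast
  obtain B where B: "B > 0" "\<forall>p\<in>?K. norm p \<le> B"
    using compact_imp_bounded[OF cK] bounded_pos by blast
  define d where "d = e / 5"
  have d: "d > 0" using e by (simp add: d_def)
  define N where "N = nat \<lceil>B / d\<rceil>"
  have BN: "B \<le> real N * d"
  proof -
    have "B / d \<le> real N" unfolding N_def by linarith
    then show ?thesis using d by (simp add: field_simps)
  qed
  define M where "M = 2*N+1"
  define I where "I = {..<M} \<times> {..<M}"
  define th where "th j p = ph d N (fst j) (fst p) * ph d N (snd j) (snd p)" for j :: "nat \<times> nat" and p :: "real \<times> real"
  define f where "f j p = th j p * \<phi> p" for j p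
  have fin: "finite I" by (simp add: I_def)
  have ftest: "\<forall>j\<in>I. test_fun (f j)"
  proof
    fix j
    have "smooth2 (th j)" unfolding th_def[abs_def] by (intro smooth2_sep smooth1_ph)
    then show "test_fun (f j)" unfolding f_def[abs_def] using test_mult phi by blast
  qed
  have decomp: "\<phi> = (\<lambda>p. \<Sum>j\<in>I. f j p)"
  proof
    fix p :: "real \<times> real"
    show "\<phi> p = (\<Sum>j\<in>I. f j p)"
    proof (cases "p \<in> ?K")
      case True
      then have np: "norm p \<le> B" using B by auto
      have "\<bar>fst p\<bar> \<le> real N * d" using norm_fst_le[of "fst p" "snd p"] np BN by simp
      moreover have "\<bar>snd p\<bar> \<le> real N * d" using norm_snd_le[of "snd p" "fst p"] np BN by simp
      ultimately have s1: "(\<Sum>i<M. ph d N i (fst p)) = 1" "(\<Sum>i<M. ph d N i (snd p)) = 1"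
        using ph_sum d unfolding M_def by auto
      have "(\<Sum>j\<in>I. th j p) = (\<Sum>i<M. ph d N i (fst p)) * (\<Sum>i<M. ph d N i (snd p))"
        unfolding I_def th_def sum_product sum.cartesian_product by (simp add: case_prod_beta)
      then have "(\<Sum>j\<in>I. th j p) = 1" using s1 by simp
      then show ?thesis unfolding f_def by (simp add: sum_distrib_right[symmetric])
    next
      case False
      then show ?thesis using notin_tsupp[OF False] by (simp add: f_def)
    qed
  qed
  have each: "T (f j) = 0" if jI: "j \<in> I" for j
  proof (cases "tsupp (f j) = {}")
    case True
    then have "f j = (\<lambda>p. 0)" using notin_tsupp[of _ "f j"] by auto
    then show ?thesis using T0 by simp
  next
    case False
    then obtain p0 where p0: "p0 \<in> tsupp (f j)" by blast
    have s1: "tsupp (f j) \<subseteq> tsupp (th j) \<inter> ?K" unfolding f_def using tsupp_mult by blast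
    then have "p0 \<in> ?K" using p0 by blast
    then obtain G where G: "G \<in> ?G" "ball p0 e \<subseteq> G" using leb by blast
    let ?Q = "{d * (real (fst j) - real N - 1) .. d * (real (fst j) - real N + 1)} \<times>
              {d * (real (snd j) - real N - 1) .. d * (real (snd j) - real N + 1)}"
    have Q: "tsupp (th j) \<subseteq> ?Q"
    proof (rule tsupp_sub)
      fix p assume "th j p \<noteq> 0"
      then have "ph d N (fst j) (fst p) \<noteq> 0" "ph d N (snd j) (snd p) \<noteq> 0" by (auto simp: th_def)
      then show "p \<in> ?Q" using ph_supp[OF d] by (cases p) auto
    qed (intro closed_Times closed_atLeastAtMost)
    have "tsupp (f j) \<subseteq> ball p0 e"
    proof
      fix q assume q: "q \<in> tsupp (f j)"
      have "p0 \<in> ?Q" "q \<in> ?Q" using p0 q s1 Q by blast+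
      then have "\<bar>fst p0 - fst q\<bar> \<le> 2 * d" "\<bar>snd p0 - snd q\<bar> \<le> 2 * d"
        by (auto simp: abs_le_iff algebra_simps)
      moreover have "p0 - q = (fst p0 - fst q, snd p0 - snd q)" by (simp add: prod_eq_iff)
      ultimately have "norm (p0 - q) \<le> 4 * d"
        using norm_Pair_le[of "fst p0 - fst q" "snd p0 - snd q"] by simp
      then show "q \<in> ball p0 e" using d e by (simp add: dist_norm d_def)
    qed
    then have "tsupp (f j) \<subseteq> G" using G by blast
    then show ?thesis using G(1) ftest jI by (simp add: vanishes_on_def)
  qed
  have "T \<phi> = (\<Sum>j\<in>I. T (f j))" using Tsum[OF fin ftest] decomp by simp
  also have "\<dots> = 0" using each by simp
  finally show ?thesis .
qed




lemma int_lemma: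
  assumes w: "loc_int w" and c: "continuous_on UNIV \<psi>" and k: "compact (tsupp \<psi>)"
  shows "integrable lborel (\<lambda>p. w p * \<psi> p)"
proof -
  let ?K = "tsupp \<psi>"
  have wK: "integrable lborel (\<lambda>p. indicator ?K p *\<^sub>R w p)"
    using w k unfolding loc_int_def set_integrable_def by blast
  have "compact (\<psi> ` ?K)" using k c by (intro compact_continuous_image continuous_on_subset[OF c]) auto
  then obtain C where C: "C > 0" "\<forall>z\<in>\<psi> ` ?K. norm z \<le> C" using compact_imp_bounded bounded_pos by metis
  have Cb: "\<bar>\<psi> p\<bar> \<le> C" for p
  proof (cases "p \<in> ?K")
    case True then show ?thesis using C by auto
  next
    case False then show ?thesis using notin_tsupp[OF False] C by simp
  qed
  have eq: "(\<lambda>p. w p * \<psi> p) = (\<lambda>p. (indicator ?K p *\<^sub>R w p) * \<psi> p)"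
  proof
    fix p show "w p * \<psi> p = (indicator ?K p *\<^sub>R w p) * \<psi> p"
      using notin_tsupp[of p \<psi>] by (cases "p \<in> ?K") auto
  qed
  have i1: "integrable lborel (\<lambda>p. C * (indicator ?K p *\<^sub>R w p))" using wK by (rule integrable_mult_right)
  have m1: "(\<lambda>p. indicator ?K p *\<^sub>R w p) \<in> borel_measurable lborel" using wK by (rule borel_measurable_integrable)
  have m2: "\<psi> \<in> borel_measurable lborel" using borel_measurable_continuous_onI[OF c] by simp
  have m: "(\<lambda>p. w p * \<psi> p) \<in> borel_measurable lborel" unfolding eq using m1 m2 by (rule borel_measurable_times)
  have ae: "AE p in lborel. norm (w p * \<psi> p) \<le> norm (C * (indicator ?K p *\<^sub>R w p))"
  proof (rule AE_I2)
    fix p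
    have "norm (w p * \<psi> p) = \<bar>indicator ?K p *\<^sub>R w p\<bar> * \<bar>\<psi> p\<bar>" using fun_cong[OF eq, of p]
      by (simp add: abs_mult)
    also have "\<dots> \<le> \<bar>indicator ?K p *\<^sub>R w p\<bar> * C" by (intro mult_left_mono Cb) simp
    also have "\<dots> = norm (C * (indicator ?K p *\<^sub>R w p))" using C by (simp add: abs_mult)
    finally show "norm (w p * \<psi> p) \<le> norm (C * (indicator ?K p *\<^sub>R w p))" .
  qed
  show ?thesis using Bochner_Integration.integrable_bound[OF i1 m ae] .
qed

lemma test_int: "loc_int w \<Longrightarrow> test_fun \<psi> \<Longrightarrow> integrable lborel (\<lambda>p. w p * \<psi> p)"
  by (intro int_lemma) (auto simp: test_fun_def dest: smooth2_self simp: pd_def)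

lemma fdistr_add: "loc_int w \<Longrightarrow> test_fun a \<Longrightarrow> test_fun b \<Longrightarrow>
    fdistr w (\<lambda>p. a p + b p) = fdistr w a + fdistr w b"
  unfolding fdistr_def using test_int[of w a] test_int[of w b]
  by (simp add: distrib_left Bochner_Integration.integral_add)

lemma fdistr_diff: "loc_int w \<Longrightarrow> test_fun a \<Longrightarrow> test_fun b \<Longrightarrow>
    fdistr w (\<lambda>p. a p - b p) = fdistr w a - fdistr w b"
  unfolding fdistr_def using test_int[of w a] test_int[of w b]
  by (simp add: right_diff_distrib Bochner_Integration.integral_diff)

lemma smooth1_exp: "smooth1 exp"
proof -
  have de: "deriv exp = exp" by (rule ext, rule DERIV_imp_deriv, rule DERIV_exp)
  have pe: "(deriv ^^ n) exp = exp" for n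
  proof (induction n)
    case (Suc n) then show ?case unfolding deriv_shift de .
  qed simp
  show ?thesis unfolding smooth1_def
  proof (intro allI)
    fix n and x :: real show "(deriv^^n) exp differentiable at x"
    proof -
      have "(exp has_real_derivative deriv exp x) (at x)" unfolding de by (rule DERIV_exp)
      then show ?thesis unfolding pe using DERIV_deriv_iff_real_differentiable by blast
    qed
  qed
qed

lemma loc_dx:
  assumes U: "open U" and eq: "\<forall>q\<in>U. f q = k q" and p: "p \<in> U"
  shows "dx f p = dx k p"
proof -
  obtain x y where pp: "p = (x, y)" by (cases p)
  obtain e where e: "e > 0" "ball p e \<subseteq> U" using U p open_contains_ball by blast
  have "\<forall>\<^sub>F s in nhds x. f (s, y) = k (s, y)"
  proof -
    have "\<forall>\<^sub>F s in nhds x. s \<in> ball x e" using e(1) by (intro eventually_nhds_in_open) auto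
    then show ?thesis
    proof (rule eventually_mono)
      fix s assume "s \<in> ball x e"
      then have "(s, y) \<in> ball p e" by (simp add: pp dist_Pair_Pair dist_commute)
      then show "f (s, y) = k (s, y)" using e(2) eq by blast
    qed
  qed
  then have "deriv (\<lambda>s. f (s, y)) x = deriv (\<lambda>s. k (s, y)) x" by (rule deriv_cong_ev) simp
  then show ?thesis by (simp add: pp dx_def)
qed

lemma dx_E: "dx (\<lambda>p. exp (fst p) * g (snd p)) = (\<lambda>p. exp (fst p) * g (snd p))"
proof
  fix p :: "real \<times> real"
  have "deriv (\<lambda>s. exp s * g (snd p)) (fst p) = exp (fst p) * g (snd p)"
    by (rule DERIV_imp_deriv) (rule DERIV_cmult_right[OF DERIV_exp])
  then show "dx (\<lambda>p. exp (fst p) * g (snd p)) p = exp (fst p) * g (snd p)" by (simp add: dx_app)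
qed

lemma notin_dsupp: "q \<notin> dsupp T \<Longrightarrow> q \<in> \<Union>{V. open V \<and> vanishes_on T V}"
  unfolding dsupp_def by auto

lemma outside_sub: "dsupp T \<subseteq> W \<Longrightarrow> - W \<subseteq> \<Union>{V. open V \<and> vanishes_on T V}"
proof
  fix q assume "dsupp T \<subseteq> W" "q \<in> - W"
  then have "q \<notin> dsupp T" by blast
  then show "q \<in> \<Union>{V. open V \<and> vanishes_on T V}" by (rule notin_dsupp)
qed

lemma dsupp_mono: "(\<And>V. vanishes_on F V \<Longrightarrow> vanishes_on S V) \<Longrightarrow> dsupp S \<subseteq> dsupp F"
proof -
  assume vt: "\<And>V. vanishes_on F V \<Longrightarrow> vanishes_on S V"
  have "\<Union>{V. open V \<and> vanishes_on F V} \<subseteq> \<Union>{V. open V \<and> vanishes_on S V}"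
    using vt by (intro Union_mono) auto
  then show ?thesis unfolding dsupp_def by (rule Diff_mono[OF order_refl])
qed

theorem lemma2p9:
  fixes T :: real and u :: "real \<Rightarrow> real \<times> real \<Rightarrow> real"
  assumes "T > 0"
    and "bbm_kp_solution T u"
    and "\<forall>t\<in>{-T..T}. compact (dsupp (fdistr (u t)))"
  shows "\<forall>t\<in>{-T..T}. \<forall>g. smooth1 g \<longrightarrow>
           pairE (dmult (\<lambda>(x, y). exp x * g y)
                    (dminus (fdistr (u t)) (ddx (ddx (fdistr (u t)))))) (\<lambda>_. 1) = 0"
proof (intro ballI allI impI)
  fix t g assume t: "t \<in> {-T..T}" and g: "smooth1 g"
  define w where "w = u t"
  have w: "loc_int w" using assms(2) t by (simp add: bbm_kp_solution_def w_def)
  define F where "F = fdistr w"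
  define E where "E = (\<lambda>p::real\<times>real. exp (fst p) * g (snd p))"
  have E_eq: "(\<lambda>(x, y). exp x * g y) = E" by (auto simp: E_def)
  define S where "S = dmult E (dminus F (ddx (ddx F)))"
  have S_app: "S \<phi> = F (\<lambda>p. E p * \<phi> p) - F (dx (dx (\<lambda>p. E p * \<phi> p)))" for \<phi>
    by (simp add: S_def dmult_def dminus_def ddx_def)
  have sE: "smooth2 E" unfolding E_def by (intro smooth2_sep smooth1_exp g)
  have Eh: "test_fun \<phi> \<Longrightarrow> test_fun (\<lambda>p. E p * \<phi> p)" for \<phi> using test_mult sE by blast
  have Fadd: "\<forall>a b. test_fun a \<and> test_fun b \<longrightarrow> F (\<lambda>p. a p + b p) = F a + F b"
    using fdistr_add[OF w] by (simp add: F_def)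
  have vt: "vanishes_on S V" if "vanishes_on F V" for V
    unfolding vanishes_on_def
  proof (intro allI impI)
    fix \<phi> assume a: "test_fun \<phi> \<and> tsupp \<phi> \<subseteq> V"
    let ?h = "\<lambda>p. E p * \<phi> p"
    have h: "test_fun ?h" "tsupp ?h \<subseteq> V" using Eh a tsupp_mult[of E \<phi>] by auto
    have "test_fun (dx (dx ?h))" "tsupp (dx (dx ?h)) \<subseteq> V"
      using h test_dx tsupp_dx[of ?h] tsupp_dx[of "dx ?h"] by auto
    then show "S \<phi> = 0" using h that unfolding S_app vanishes_on_def by simp
  qed
  have dS: "dsupp S \<subseteq> dsupp F" using vt by (rule dsupp_mono)
  have cF: "compact (dsupp F)" using assms(3) t by (simp add: F_def w_def)
  obtain R where R: "R > 0" "\<forall>p\<in>dsupp F. norm p \<le> R"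
    using compact_imp_bounded[OF cF] bounded_pos by blast
  define b where "b s = st (1 * s + (R + 2)) * st ((-1) * s + (R + 2))" for s
  have sb: "smooth1 b"
  proof -
    have "sm k (\<lambda>s. st (1 * s + (R + 2)) * st ((-1) * s + (R + 2)))" for k
      by (intro sm_mult sm_affine sm_st)
    then show ?thesis unfolding b_def[abs_def] smooth1_sm by blast
  qed
  have b1: "\<bar>s\<bar> < R + 1 \<Longrightarrow> b s = 1" for s by (simp add: b_def st1)
  have b0: "b s \<noteq> 0 \<Longrightarrow> s \<in> {-(R+2)..R+2}" for s
    by (cases "s \<le> -(R+2)"; cases "s \<ge> R+2") (auto simp: b_def st0)
  define chi2 where "chi2 p = b (fst p) * b (snd p)" for p :: "real \<times> real"
  define U2 where "U2 = {-(R+1)<..<R+1} \<times> {-(R+1)<..<R+1}"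
  have oU2: "open U2" unfolding U2_def by (intro open_Times open_greaterThanLessThan)
  have chi2_1: "\<forall>q\<in>U2. chi2 q = 1" by (auto simp: U2_def chi2_def b1)
  have tchi2: "test_fun chi2"
  proof -
    have "tsupp chi2 \<subseteq> {-(R+2)..R+2} \<times> {-(R+2)..R+2}"
    proof (rule tsupp_sub)
      fix p assume "chi2 p \<noteq> 0"
      then show "p \<in> {-(R+2)..R+2} \<times> {-(R+2)..R+2}" using b0 by (cases p) (auto simp: chi2_def)
    qed (intro closed_Times closed_atLeastAtMost)
    moreover have "compact ({-(R+2)..R+2} \<times> {-(R+2)..R+2::real})" by (intro compact_Times compact_Icc)
    moreover have "smooth2 chi2" unfolding chi2_def[abs_def] by (intro smooth2_sep sb)
    ultimately show ?thesis unfolding test_fun_def using compact_sub by blast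
  qed
  have FU2: "dsupp F \<subseteq> U2"
  proof
    fix p assume "p \<in> dsupp F"
    then have "norm p \<le> R" using R by auto
    then have "\<bar>fst p\<bar> \<le> R" "\<bar>snd p\<bar> \<le> R"
      using norm_fst_le[of "fst p" "snd p"] norm_snd_le[of "snd p" "fst p"] by auto
    then show "p \<in> U2" by (cases p) (auto simp: U2_def)
  qed
  define P where "P chi = (test_fun chi \<and> (\<exists>U. open U \<and> dsupp S \<subseteq> U \<and> (\<forall>q\<in>U. chi q = 1)))" for chi
  have SU2: "dsupp S \<subseteq> U2" using dS FU2 by (rule order_trans)
  have "P chi2" unfolding P_def using tchi2 oU2 SU2 chi2_1 by blast
  define chi where "chi = (SOME chi. P chi)"
  have "P chi" unfolding chi_def by (rule someI[of P chi2, OF \<open>P chi2\<close>])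
  then obtain U where tchi: "test_fun chi" and U: "open U" "dsupp S \<subseteq> U" "\<forall>q\<in>U. chi q = 1"
    unfolding P_def by blast
  have pair: "pairE S (\<lambda>_. 1) = S chi"
  proof -
    have "(\<lambda>p. (SOME chi. test_fun chi \<and> (\<exists>U. open U \<and> dsupp S \<subseteq> U \<and> (\<forall>q\<in>U. chi q = 1))) p * 1) = chi"
      unfolding chi_def P_def by simp
    then show ?thesis unfolding pairE_def by simp
  qed
  have Sadd: "\<forall>a c. test_fun a \<and> test_fun c \<longrightarrow> S (\<lambda>p. a p + c p) = S a + S c"
  proof (intro allI impI)
    fix a c assume ac: "test_fun a \<and> test_fun c"
    let ?ha = "\<lambda>p. E p * a p" and ?hc = "\<lambda>p. E p * c p"
    have ta: "test_fun ?ha" "test_fun ?hc" using Eh ac by auto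
    have s2: "smooth2 ?ha" "smooth2 ?hc" using ta by (auto simp: test_fun_def)
    have pdx1: "pdx ?ha" "pdx ?hc" using s2 smooth2_self by (auto simp: pd_def)
    have pdx2: "pdx (dx ?ha)" "pdx (dx ?hc)" using s2 smooth2_dx smooth2_self by (auto simp: pd_def)
    have e1: "(\<lambda>p. E p * (a p + c p)) = (\<lambda>p. ?ha p + ?hc p)" by (simp add: distrib_left)
    have e2: "dx (dx (\<lambda>p. ?ha p + ?hc p)) = (\<lambda>p. dx (dx ?ha) p + dx (dx ?hc) p)"
      using dx_add[OF pdx1] dx_add[OF pdx2] by simp
    have tdd: "test_fun (dx (dx ?ha))" "test_fun (dx (dx ?hc))" using ta test_dx by auto
    show "S (\<lambda>p. a p + c p) = S a + S c"
      unfolding S_app e1 e2 using Fadd ta tdd by simp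
  qed
  have "S (\<lambda>p. chi p - chi2 p) = 0"
  proof (rule glue[OF Sadd test_diff[OF tchi tchi2]])
    have "tsupp (\<lambda>p. chi p - chi2 p) \<subseteq> - (U \<inter> U2)"
    proof (rule tsupp_sub)
      fix p assume "chi p - chi2 p \<noteq> 0"
      then show "p \<in> - (U \<inter> U2)" using U(3) chi2_1 by auto
    qed (use U(1) oU2 in auto)
    moreover have "- (U \<inter> U2) \<subseteq> \<Union>{V. open V \<and> vanishes_on S V}"
      using U(2) SU2 by (intro outside_sub) simp
    ultimately show "tsupp (\<lambda>p. chi p - chi2 p) \<subseteq> \<Union>{V. open V \<and> vanishes_on S V}" by blast
  qed
  moreover have "S chi = S chi2 + S (\<lambda>p. chi p - chi2 p)"
    using Sadd[rule_format, of chi2 "\<lambda>p. chi p - chi2 p"] tchi2 test_diff[OF tchi tchi2] by simp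
  ultimately have Schi: "S chi = S chi2" by simp
  let ?h2 = "\<lambda>p. E p * chi2 p"
  have th2: "test_fun ?h2" using Eh tchi2 by blast
  have tdd2: "test_fun (dx (dx ?h2))" using th2 test_dx by blast
  have dxE: "dx E = E" unfolding E_def by (rule dx_E)
  have d0: "\<forall>q\<in>U2. ?h2 q = E q" using chi2_1 by simp
  have d1: "\<forall>q\<in>U2. dx ?h2 q = E q"
  proof
    fix q assume "q \<in> U2"
    from loc_dx[OF oU2 d0 this] show "dx ?h2 q = E q" unfolding dxE .
  qed
  have d2: "\<forall>q\<in>U2. dx (dx ?h2) q = E q"
  proof
    fix q assume "q \<in> U2"
    from loc_dx[OF oU2 d1 this] show "dx (dx ?h2) q = E q" unfolding dxE .
  qed
  let ?psi = "\<lambda>p. ?h2 p - dx (dx ?h2) p"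
  have "F ?psi = 0"
  proof (rule glue[OF Fadd test_diff[OF th2 tdd2]])
    have "tsupp ?psi \<subseteq> - U2"
    proof (rule tsupp_sub)
      fix p assume "?h2 p - dx (dx ?h2) p \<noteq> 0"
      then show "p \<in> - U2" using d2 chi2_1 by auto
    qed (use oU2 in auto)
    moreover have "- U2 \<subseteq> \<Union>{V. open V \<and> vanishes_on F V}"
      using FU2 by (rule outside_sub)
    ultimately show "tsupp ?psi \<subseteq> \<Union>{V. open V \<and> vanishes_on F V}" by blast
  qed
  moreover have "F ?psi = S chi2"
    unfolding S_app F_def using fdistr_diff[OF w th2 tdd2] by simp
  ultimately have "S chi2 = 0" by simp
  then have "pairE S (\<lambda>_. 1) = 0" using pair Schi by simp
  moreover have "S = dmult (\<lambda>(x, y). exp x * g y) (dminus (fdistr (u t)) (ddx (ddx (fdistr (u t)))))"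
    unfolding S_def E_eq F_def w_def ..
  ultimately show "pairE (dmult (\<lambda>(x, y). exp x * g y)
                    (dminus (fdistr (u t)) (ddx (ddx (fdistr (u t)))))) (\<lambda>_. 1) = 0"
    by simp
qed


end
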